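(* Let $d\ge2$, $E\subset[1,2]$ and $0\le\beta\le1$. If $M_E$ is bounded from $L^p_{rad}(\mathbb{R}^d)$ to $L^q(\mathbb{R}^d)$ for some $(1/p,1/q)\in[Q_1(\beta),Q_2(\beta)]$, then $\sup_{0<\delta<1}\delta^\beta N(E,\delta)<\infty$. If in addition $\beta=1$, then $\sup_{0<\delta<1}(\log(1/\delta))^{q/d}\,\delta N(E,\delta)<\infty$.
   Context: $M_Ef(x)=\sup_{t\in E}\left|\int_{\mathbb{S}^{d-1}}f(x-ty)\,d\sigma(y)\right|$ with $\sigma$ normalized surface measure on $\mathbb{S}^{d-1}$; $L^p_{rad}$ is the space of radial $L^p$ functions. $N(E,\delta)$ is the minimal number of intervals of length $\delta$ covering $E$. $Q_1(\beta)=(\frac{d-1}{d-1+\beta},\frac{d-1}{d-1+\beta})$, $Q_2(\beta)=(\frac{d(d-1)}{d^2-1+\beta},\frac{d-1}{d^2-1+\beta})$, and $[P,Q]$ is the closed segment between them. *)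

theory Defs
  imports "HOL-Analysis.Analysis"
begin

text \<open>Normalized surface measure on the unit sphere, realized as the push-forward of
  normalized Lebesgue measure on the unit ball under z \<mapsto> z/|z|.\<close>
definition sph_avg :: "('a::euclidean_space \<Rightarrow> real) \<Rightarrow> 'a \<Rightarrow> real \<Rightarrow> real" where
  "sph_avg f x t =
     (LINT z : ball 0 1 | lborel. f (x - t *\<^sub>R (z /\<^sub>R norm z))) / measure lborel (ball (0::'a) 1)"

definition sph_max :: "real set \<Rightarrow> ('a::euclidean_space \<Rightarrow> real) \<Rightarrow> 'a \<Rightarrow> ennreal" where
  "sph_max E f x = (SUP t\<in>E. ennreal \<bar>sph_avg f x t\<bar>)"

definition radial :: "('a::real_normed_vector \<Rightarrow> real) \<Rightarrow> bool" where
  "radial f \<longleftrightarrow> (\<forall>x y. norm x = norm y \<longrightarrow> f x = f y)"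

definition Lp_norm :: "real \<Rightarrow> ('a::euclidean_space \<Rightarrow> real) \<Rightarrow> real" where
  "Lp_norm p f = (LINT x | lborel. \<bar>f x\<bar> powr p) powr (1 / p)"

definition enn_powr :: "ennreal \<Rightarrow> real \<Rightarrow> ennreal" where
  "enn_powr x q = (if x = \<infinity> then \<infinity> else ennreal (enn2real x powr q))"

text \<open>Boundedness of M_E from L^p_rad to L^q, as an a priori inequality on the dense class of
  continuous compactly supported radial functions.\<close>
definition sph_max_bounded_rad :: "'a::euclidean_space itself \<Rightarrow> real set \<Rightarrow> real \<Rightarrow> real \<Rightarrow> bool" where
  "sph_max_bounded_rad _ E p q \<longleftrightarrow>
     (\<exists>C::real. \<forall>f::'a \<Rightarrow> real. radial f \<and> continuous_on UNIV f \<and> compact (closure {x. f x \<noteq> 0}) \<longrightarrow>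
        (\<integral>\<^sup>+ x. enn_powr (sph_max E f x) q \<partial>lborel) \<le> ennreal ((C * Lp_norm p f) powr q))"

definition cover_num :: "real set \<Rightarrow> real \<Rightarrow> nat" where
  "cover_num E \<delta> = (LEAST n. \<exists>A. finite A \<and> card A = n \<and> E \<subseteq> (\<Union>a\<in>A. {a..a+\<delta>}))"

definition Q1 :: "nat \<Rightarrow> real \<Rightarrow> real \<times> real" where
  "Q1 d \<beta> = ((real d - 1) / (real d - 1 + \<beta>), (real d - 1) / (real d - 1 + \<beta>))"

definition Q2 :: "nat \<Rightarrow> real \<Rightarrow> real \<times> real" where
  "Q2 d \<beta> = (real d * (real d - 1) / ((real d)^2 - 1 + \<beta>), (real d - 1) / ((real d)^2 - 1 + \<beta>))"

end

theory Submission
  imports Defs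
begin


definition bump :: "real \<Rightarrow> 'a::euclidean_space \<Rightarrow> real" where
  "bump r x = max 0 (min 1 (2 - norm x * inverse r))"

lemma bump_nonneg: "0 \<le> bump r x" by (simp add: bump_def)
lemma bump_le1: "bump r x \<le> 1" by (simp add: bump_def)
lemma bump_one: "r > 0 \<Longrightarrow> norm x \<le> r \<Longrightarrow> bump r x = 1"
  by (simp add: bump_def field_simps)
lemma bump_zero: "r > 0 \<Longrightarrow> norm x \<ge> 2*r \<Longrightarrow> bump r x = 0"
  by (simp add: bump_def field_simps)
lemma bump_cont: "continuous_on UNIV (bump r :: 'a::euclidean_space \<Rightarrow> real)"
  unfolding bump_def[abs_def] by (intro continuous_intros)

lemma unit_ball_pos: "measure lborel (ball (0::'a::euclidean_space) 1) > 0"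
  by (simp add: content_ball_pos[of 1 "0::'a"])

lemma content_ball': "r \<ge> 0 \<Longrightarrow> measure lborel (ball (c::'a::euclidean_space) r) = measure lborel (ball (0::'a) 1) * r ^ DIM('a)"
  using content_ball_conv_unit_ball[of r c] by simp

lemma dir_close:
  fixes z w :: "'a::euclidean_space"
  assumes "norm w = 1" "s > 0" "norm (z - s *\<^sub>R w) < e" "e \<le> s"
  shows "norm (z /\<^sub>R norm z - w) \<le> 2 * norm (z - s *\<^sub>R w) / s"
proof -
  define y where "y = z /\<^sub>R s"
  have zy: "z = s *\<^sub>R y" using assms by (simp add: y_def)
  have yw: "norm (y - w) = norm (z - s *\<^sub>R w) / s"
  proof -
    have "z - s *\<^sub>R w = s *\<^sub>R (y - w)" by (simp add: zy algebra_simps)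
    then show ?thesis using assms(2) by simp
  qed
  have ny: "norm y > 0"
  proof -
    have "norm (z - s *\<^sub>R w) < s" using assms by simp
    then have "s * norm (y - w) < s * 1" using yw assms(2) by simp
    then have "norm (y - w) < 1" using assms(2) mult_less_cancel_left_pos by blast
    then show ?thesis using assms(1) norm_triangle_ineq2[of w y] by (auto simp: norm_minus_commute)
  qed
  have "z /\<^sub>R norm z = y /\<^sub>R norm y" using assms(2) by (simp add: zy)
  moreover have "norm (y /\<^sub>R norm y - w) \<le> norm (y /\<^sub>R norm y - y) + norm (y - w)"
    by (metis diff_add_cancel norm_triangle_ineq add_diff_eq)
  moreover have "norm (y /\<^sub>R norm y - y) = \<bar>1 - norm y\<bar>"
  proof -
    have "y /\<^sub>R norm y - y = (1/norm y - 1) *\<^sub>R y" by (simp add: algebra_simps divide_inverse)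
    then have "norm (y /\<^sub>R norm y - y) = \<bar>1/norm y - 1\<bar> * norm y" by simp
    also have "\<dots> = \<bar>1 - norm y\<bar>" using ny by (simp add: field_simps abs_mult[symmetric] abs_of_pos)
    finally show ?thesis .
  qed
  moreover have "\<bar>1 - norm y\<bar> \<le> norm (y - w)"
    using assms(1) norm_triangle_ineq3[of w y] by (simp add: norm_minus_commute)
  ultimately show ?thesis using yw by simp
qed


lemma cone_set:
  fixes x :: "'a::euclidean_space"
  assumes t1: "1 \<le> t" and t2: "t \<le> 2" and r0: "0 < \<rho>" and r1: "\<rho> \<le> 1"
    and xt: "\<bar>norm x - t\<bar> \<le> \<rho>/4"
  shows "\<exists>U. U \<in> sets lborel \<and> U \<subseteq> ball 0 1 \<and>
     measure lborel U \<ge> 3 * measure lborel (ball (0::'a) 1) / 64 ^ DIM('a) * \<rho> ^ (DIM('a) - 1) \<and>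
     (\<forall>z\<in>U. norm (x - t *\<^sub>R (z /\<^sub>R norm z)) < \<rho>)"
proof -
  define V where "V = measure lborel (ball (0::'a) 1)"
  define d where "d = DIM('a)"
  have V0: "V > 0" unfolding V_def by (rule unit_ball_pos)
  have nx: "norm x > 0" using xt t1 r1 by auto
  define w where "w = x /\<^sub>R norm x"
  have nw: "norm w = 1" using nx by (simp add: w_def)
  define n where "n = nat \<lfloor>4/\<rho>\<rfloor>"
  define s where "s = (\<lambda>k::nat. 1/4 + real k * \<rho>/16)"
  define U where "U = (\<Union>k\<in>{..<n}. ball (s k *\<^sub>R w) (\<rho>/64))"
  have s_lo: "s k \<ge> 1/4" for k using r0 by (simp add: s_def)
  have s_hi: "s k < 1/2" if "k < n" for k
  proof -
    have "real k < real n" using that by simp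
    also have "real n \<le> 4/\<rho>" unfolding n_def using r0 by simp
    finally have "real k * \<rho> < 4" using r0 by (simp add: field_simps)
    then show ?thesis by (simp add: s_def mult.commute)
  qed
  have nbig: "real n \<ge> 3/\<rho>"
  proof -
    have "4/\<rho> \<ge> 1" using r0 r1 by (simp add: field_simps)
    have "\<lfloor>4/\<rho>\<rfloor> \<ge> 0" using r0 by simp
    then have "real n = real_of_int \<lfloor>4/\<rho>\<rfloor>" unfolding n_def by simp
    moreover have "real_of_int \<lfloor>4/\<rho>\<rfloor> > 4/\<rho> - 1" by linarith
    moreover have "4/\<rho> - 1 \<ge> 3/\<rho>" using r0 r1 by (simp add: field_simps)
    ultimately show ?thesis by linarith
  qed
  have disj: "disjoint_family_on (\<lambda>k. ball (s k *\<^sub>R w) (\<rho>/64)) {..<n}"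
    unfolding disjoint_family_on_def
  proof (intro ballI impI)
    fix k l assume kl: "k \<in> {..<n}" "l \<in> {..<n}" "k \<noteq> l"
    show "ball (s k *\<^sub>R w) (\<rho> / 64) \<inter> ball (s l *\<^sub>R w) (\<rho> / 64) = {}"
    proof (rule ccontr)
      assume "ball (s k *\<^sub>R w) (\<rho> / 64) \<inter> ball (s l *\<^sub>R w) (\<rho> / 64) \<noteq> {}"
      then obtain z where z: "dist (s k *\<^sub>R w) z < \<rho>/64" "dist (s l *\<^sub>R w) z < \<rho>/64" by auto
      have "dist (s k *\<^sub>R w) (s l *\<^sub>R w) < \<rho>/64 + \<rho>/64"
        using dist_triangle_less_add[OF z(1), of "s l *\<^sub>R w" "\<rho>/64"] z(2) by (simp add: dist_commute)
      moreover have "dist (s k *\<^sub>R w) (s l *\<^sub>R w) = \<bar>s k - s l\<bar>"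
      proof -
        have "s k *\<^sub>R w - s l *\<^sub>R w = (s k - s l) *\<^sub>R w" by (simp add: scaleR_diff_left)
        then show ?thesis using nw by (simp add: dist_norm)
      qed
      moreover have "s k - s l = (real k - real l) * (\<rho>/16)"
        by (simp add: s_def algebra_simps)
      moreover have "\<bar>real k - real l\<bar> \<ge> 1" using kl(3) by linarith
      moreover have "\<bar>(real k - real l) * (\<rho>/16)\<bar> = \<bar>real k - real l\<bar> * (\<rho>/16)"
        using r0 by (simp add: abs_mult)
      moreover have "\<bar>real k - real l\<bar> * (\<rho>/16) \<ge> 1 * (\<rho>/16)"
        using \<open>\<bar>real k - real l\<bar> \<ge> 1\<close> r0 by (intro mult_right_mono) auto
      ultimately show False using r0 by linarith
    qed
  qed
  have meas: "measure lborel U = real n * (V * (\<rho>/64) ^ d)"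
  proof -
    have "measure lborel U = (\<Sum>k\<in>{..<n}. measure lborel (ball (s k *\<^sub>R w) (\<rho>/64)))"
      unfolding U_def
    proof (rule measure_finite_Union[OF _ _ disj])
      show "(\<lambda>k. ball (s k *\<^sub>R w) (\<rho>/64)) ` {..<n} \<subseteq> sets lborel" by auto
      show "emeasure lborel (ball (s k *\<^sub>R w) (\<rho>/64)) \<noteq> \<infinity>" for k
        using emeasure_lborel_ball_finite[of "s k *\<^sub>R w" "\<rho>/64"] by simp
    qed simp
    also have "\<dots> = (\<Sum>k\<in>{..<n}. V * (\<rho>/64) ^ d)"
    proof (intro sum.cong refl)
      fix k show "measure lborel (ball (s k *\<^sub>R w) (\<rho>/64)) = V * (\<rho>/64) ^ d"
        unfolding V_def d_def by (rule content_ball') (use r0 in simp)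
    qed
    finally show ?thesis by simp
  qed
  have "3 * V / 64 ^ d * \<rho> ^ (d - 1) = (3/\<rho>) * (V * (\<rho>/64) ^ d)"
  proof -
    have d1: "d = Suc (d - 1)" unfolding d_def using DIM_positive[where 'a='a] by linarith
    have "\<rho> ^ d = \<rho> * \<rho> ^ (d - 1)" by (subst d1) simp
    then show ?thesis using r0 by (simp add: field_simps power_divide)
  qed
  also have "\<dots> \<le> real n * (V * (\<rho>/64) ^ d)"
    using nbig V0 r0 by (intro mult_right_mono) auto
  finally have m: "3 * V / 64 ^ d * \<rho> ^ (d - 1) \<le> measure lborel U" using meas by simp
  have sub: "U \<subseteq> ball 0 1"
  proof
    fix z assume "z \<in> U"
    then obtain k where k: "k < n" "dist (s k *\<^sub>R w) z < \<rho>/64" unfolding U_def by auto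
    have "norm z \<le> norm (s k *\<^sub>R w) + dist (s k *\<^sub>R w) z"
      by (metis dist_norm norm_triangle_sub norm_minus_commute)
    also have "norm (s k *\<^sub>R w) = s k" using nw s_lo[of k] by simp
    finally show "z \<in> ball 0 1" using k s_hi[OF k(1)] r1 by simp
  qed
  have pts: "norm (x - t *\<^sub>R (z /\<^sub>R norm z)) < \<rho>" if "z \<in> U" for z
  proof -
    from that obtain k where k: "k < n" "dist (s k *\<^sub>R w) z < \<rho>/64" unfolding U_def by auto
    have sk: "s k > 0" using s_lo[of k] by linarith
    have nz: "norm (z - s k *\<^sub>R w) < \<rho>/64" using k by (simp add: dist_norm norm_minus_commute)
    have "norm (z /\<^sub>R norm z - w) \<le> 2 * norm (z - s k *\<^sub>R w) / s k"
      by (rule dir_close[OF nw sk nz]) (use r1 s_lo[of k] in simp)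
    also have "\<dots> \<le> 2 * (\<rho>/64) / (1/4)"
      using nz sk s_lo[of k] r0 by (intro divide_mono mult_left_mono) auto
    finally have u: "norm (z /\<^sub>R norm z - w) \<le> \<rho>/8" by simp
    have xw: "x - t *\<^sub>R w = (norm x - t) *\<^sub>R w" using nx by (simp add: w_def algebra_simps)
    have "x - t *\<^sub>R (z /\<^sub>R norm z) = (x - t *\<^sub>R w) - t *\<^sub>R (z /\<^sub>R norm z - w)"
      by (simp add: algebra_simps)
    then have "norm (x - t *\<^sub>R (z /\<^sub>R norm z)) \<le> norm (x - t *\<^sub>R w) + norm (t *\<^sub>R (z /\<^sub>R norm z - w))"
      by (metis norm_triangle_ineq4)
    also have "norm (x - t *\<^sub>R w) = \<bar>norm x - t\<bar>" using nw xw by simp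
    also have "norm (t *\<^sub>R (z /\<^sub>R norm z - w)) = t * norm (z /\<^sub>R norm z - w)" using t1 by simp
    also have "t * norm (z /\<^sub>R norm z - w) \<le> 2 * (\<rho>/8)" using u t1 t2
      by (intro mult_mono) auto
    finally show ?thesis using xt r0 by linarith
  qed
  show ?thesis
    by (rule exI[of _ U]) (use sub m pts in \<open>auto simp: U_def V_def d_def\<close>)
qed


lemma bump_meas: "r > 0 \<Longrightarrow> bump r \<in> borel_measurable borel"
  by (rule borel_measurable_continuous_onI[OF bump_cont])

lemma sph_avg_lower:
  fixes x :: "'a::euclidean_space" and F :: "nat set"
  assumes F: "finite F" and a: "\<And>k. k \<in> F \<Longrightarrow> a k \<ge> 0"
    and r: "\<And>k. k \<in> F \<Longrightarrow> 0 < \<rho> k \<and> \<rho> k \<le> 1 \<and> \<bar>norm x - t\<bar> \<le> \<rho> k / 4"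
    and t1: "1 \<le> t" and t2: "t \<le> 2"
  shows "sph_avg (\<lambda>y. \<Sum>k\<in>F. a k * bump (\<rho> k) y) x t \<ge>
     (\<Sum>k\<in>F. a k * (3 * measure lborel (ball (0::'a) 1) / 64 ^ DIM('a) * \<rho> k ^ (DIM('a) - 1))) / measure lborel (ball (0::'a) 1)"
proof -
  define V where "V = measure lborel (ball (0::'a) 1)"
  define c0 where "c0 = 3 * V / 64 ^ DIM('a)"
  have V0: "V > 0" unfolding V_def by (rule unit_ball_pos)
  define f where "f = (\<lambda>y::'a. \<Sum>k\<in>F. a k * bump (\<rho> k) y)"
  define \<phi> where "\<phi> = (\<lambda>z::'a. x - t *\<^sub>R (z /\<^sub>R norm z))"
  have "\<forall>k\<in>F. \<exists>U. U \<in> sets lborel \<and> U \<subseteq> ball 0 1 \<and> measure lborel U \<ge> c0 * \<rho> k ^ (DIM('a) - 1) \<and>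
     (\<forall>z\<in>U. norm (\<phi> z) < \<rho> k)"
    using cone_set[OF t1 t2] r unfolding c0_def V_def \<phi>_def by blast
  then obtain U where U: "\<And>k. k \<in> F \<Longrightarrow> U k \<in> sets lborel \<and> U k \<subseteq> ball 0 1 \<and>
     measure lborel (U k) \<ge> c0 * \<rho> k ^ (DIM('a) - 1) \<and> (\<forall>z\<in>U k. norm (\<phi> z) < \<rho> k)"
    by metis
  have Ufin: "emeasure lborel (U k) < \<infinity>" if "k \<in> F" for k
  proof -
    have "emeasure lborel (U k) \<le> emeasure lborel (ball (0::'a) 1)"
      using U[OF that] by (intro emeasure_mono) auto
    then show ?thesis using emeasure_lborel_ball_finite[of "0::'a" 1] by order
  qed
  define h where "h = (\<lambda>z. indicator (ball 0 1) z * f (\<phi> z))"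
  define g where "g = (\<lambda>z. \<Sum>k\<in>F. a k * indicator (U k) z :: real)"
  have fmeas: "f \<in> borel_measurable borel"
    unfolding f_def using r by (intro borel_measurable_sum borel_measurable_times) (auto intro: bump_meas)
  have phimeas: "\<phi> \<in> borel_measurable lborel"
    unfolding \<phi>_def by measurable
  have hmeas: "h \<in> borel_measurable lborel"
    unfolding h_def
    by (intro borel_measurable_times borel_measurable_indicator measurable_compose[OF phimeas fmeas]) auto
  have fbound: "\<bar>f y\<bar> \<le> (\<Sum>k\<in>F. a k)" for y
  proof -
    have "0 \<le> f y" unfolding f_def using a by (intro sum_nonneg mult_nonneg_nonneg bump_nonneg) auto
    moreover have "f y \<le> (\<Sum>k\<in>F. a k)" unfolding f_def
      using a by (intro sum_mono) (simp add: bump_le1 mult_left_le)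
    ultimately show ?thesis by simp
  qed
  have bint: "integrable lborel (\<lambda>z. (\<Sum>k\<in>F. a k) * indicator (ball (0::'a) 1) z)"
    using emeasure_lborel_ball_finite[of "0::'a" 1] by (intro integrable_mult_right integrable_real_indicator) auto
  have hbd: "AE z in lborel. norm (h z) \<le> norm ((\<Sum>k\<in>F. a k) * indicator (ball (0::'a) 1) z)"
  proof (rule AE_I2)
    fix z
    have "0 \<le> (\<Sum>k\<in>F. a k)" using a by (simp add: sum_nonneg)
    then show "norm (h z) \<le> norm ((\<Sum>k\<in>F. a k) * indicator (ball (0::'a) 1) z)"
      using fbound[of "\<phi> z"] by (auto simp: h_def indicator_def)
  qed
  have hint: "integrable lborel h"
    by (rule Bochner_Integration.integrable_bound[OF bint hmeas hbd])
  have gint: "integrable lborel g"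
    unfolding g_def using U Ufin
    by (intro Bochner_Integration.integrable_sum Bochner_Integration.integrable_mult_right integrable_real_indicator) auto
  have gh: "g z \<le> h z" for z
  proof (cases "z \<in> ball 0 1")
    case True
    have "g z \<le> f (\<phi> z)" unfolding g_def f_def
    proof (intro sum_mono mult_left_mono)
      fix k assume k: "k \<in> F"
      show "indicator (U k) z \<le> bump (\<rho> k) (\<phi> z)"
      proof (cases "z \<in> U k")
        case True
        then have "norm (\<phi> z) \<le> \<rho> k" using U[OF k] by force
        then show ?thesis using True r[OF k] by (simp add: bump_one)
      qed (simp add: bump_nonneg)
      show "0 \<le> a k" using a k by simp
    qed
    then show ?thesis using True by (simp add: h_def)
  next
    case False
    then have "z \<notin> U k" if "k \<in> F" for k using U[OF that] by blast
    then show ?thesis using False by (simp add: g_def h_def)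
  qed
  have "integral\<^sup>L lborel g = (\<Sum>k\<in>F. a k * measure lborel (U k))"
    unfolding g_def using U Ufin
    by (subst Bochner_Integration.integral_sum) (auto intro!: integrable_mult_right integrable_real_indicator)
  also have "\<dots> \<ge> (\<Sum>k\<in>F. a k * (c0 * \<rho> k ^ (DIM('a) - 1)))"
    using U a by (intro sum_mono mult_left_mono) auto
  finally have "(\<Sum>k\<in>F. a k * (c0 * \<rho> k ^ (DIM('a) - 1))) \<le> integral\<^sup>L lborel h"
    using integral_mono[OF gint hint gh] by linarith
  moreover have "sph_avg f x t = integral\<^sup>L lborel h / V"
    unfolding sph_avg_def set_lebesgue_integral_def h_def \<phi>_def V_def by simp
  ultimately show ?thesis using V0 unfolding f_def[symmetric] c0_def[symmetric] V_def[symmetric]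
    by (simp add: divide_right_mono)
qed



lemma pow_diff_ge:
  fixes a b :: real and d :: nat
  assumes "0 \<le> a" "a \<le> b" "1 \<le> b" "d \<ge> 1"
  shows "b ^ d - a ^ d \<ge> b - a"
proof -
  have d1: "d = Suc (d - 1)" using assms(4) by simp
  have "a ^ d = a * a ^ (d - 1)" by (subst d1) simp
  also have "\<dots> \<le> a * b ^ (d - 1)" using assms by (intro mult_left_mono power_mono) auto
  finally have "b ^ d - a ^ d \<ge> b * b ^ (d-1) - a * b ^ (d - 1)"
    by (subst d1) simp
  then have "b ^ d - a ^ d \<ge> (b - a) * b ^ (d - 1)" by (simp add: algebra_simps)
  moreover have "(b - a) * b ^ (d - 1) \<ge> (b - a) * 1"
    using assms by (intro mult_left_mono one_le_power) auto
  ultimately show ?thesis by simp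
qed

lemma shell_measure:
  assumes t: "1 \<le> t" "t \<le> 2" and \<delta>: "0 < \<delta>" "\<delta> < 1"
  shows "measure lborel {x::'a::euclidean_space. \<bar>norm x - t\<bar> < \<delta>/4} \<ge> measure lborel (ball (0::'a) 1) * (\<delta>/2)"
proof -
  define V where "V = measure lborel (ball (0::'a) 1)"
  have V0: "V > 0" unfolding V_def by (rule unit_ball_pos)
  define a where "a = t - \<delta>/4"
  define b where "b = t + \<delta>/4"
  have a0: "a > 0" using t \<delta> by (simp add: a_def)
  have eq: "{x::'a. \<bar>norm x - t\<bar> < \<delta>/4} = ball 0 b - cball 0 a"
  proof (rule set_eqI)
    fix x :: 'a
    have 1: "x \<in> ball 0 b - cball 0 a \<longleftrightarrow> norm x < b \<and> a < norm x" by auto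
    have 2: "(\<bar>norm x - t\<bar> < \<delta>/4) \<longleftrightarrow> norm x < b \<and> a < norm x"
      unfolding a_def b_def by arith
    show "x \<in> {x::'a. \<bar>norm x - t\<bar> < \<delta>/4} \<longleftrightarrow> x \<in> ball 0 b - cball 0 a" using 1 2 by simp
  qed
  have "measure lborel (ball (0::'a) b - cball 0 a) = measure lborel (ball (0::'a) b) - measure lborel (cball (0::'a) a)"
    using emeasure_lborel_ball_finite[of "0::'a" b] a0 \<delta>
    by (intro measure_Diff) (auto simp: a_def b_def)
  also have "measure lborel (cball (0::'a) a) = measure lborel (ball (0::'a) a)"
    by (rule content_cball_conv_ball)
  also have "measure lborel (ball (0::'a) b) = V * b ^ DIM('a)"
    unfolding V_def by (rule content_ball') (use a0 \<delta> t in \<open>simp add: a_def b_def\<close>)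
  also have "measure lborel (ball (0::'a) a) = V * a ^ DIM('a)"
    unfolding V_def by (rule content_ball') (use a0 in simp)
  also have "V * b ^ DIM('a) - V * a ^ DIM('a) = V * (b ^ DIM('a) - a ^ DIM('a))" by (simp add: algebra_simps)
  also have "\<dots> \<ge> V * (b - a)"
    using V0 a0 t \<delta> by (intro mult_left_mono pow_diff_ge) (auto simp: a_def b_def DIM_positive Suc_le_eq)
  finally show ?thesis using eq by (simp add: V_def a_def b_def)
qed


lemma cover_num_le:
  assumes "finite A" "E \<subseteq> (\<Union>a\<in>A. {a..a+\<delta>})"
  shows "cover_num E \<delta> \<le> card A"
  unfolding cover_num_def by (rule Least_le) (use assms in blast)

lemma count_sep:
  assumes E: "E \<subseteq> {1..2}" and \<delta>: "0 < \<delta>" "\<delta> < 1"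
  shows "\<exists>T. finite T \<and> T \<subseteq> E \<and> (\<forall>s\<in>T. \<forall>t\<in>T. s \<noteq> t \<longrightarrow> \<bar>s - t\<bar> \<ge> \<delta>) \<and> cover_num E \<delta> \<le> 2 * card T"
proof -
  define n where "n = nat \<lceil>1/\<delta>\<rceil>"
  define I where "I = (\<lambda>j::nat. {1 + real j * \<delta> .. 1 + real j * \<delta> + \<delta>})"
  define J where "J = {j. j \<le> n \<and> E \<inter> I j \<noteq> {}}"
  have Jfin: "finite J" unfolding J_def by simp
  have cov: "E \<subseteq> (\<Union>j\<in>J. I j)"
  proof
    fix e assume e: "e \<in> E"
    define j where "j = nat \<lfloor>(e - 1)/\<delta>\<rfloor>"
    have e12: "1 \<le> e" "e \<le> 2" using e E by auto
    have fl0: "\<lfloor>(e - 1)/\<delta>\<rfloor> \<ge> 0" using e12 \<delta> by simp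
    have jr: "real j = of_int \<lfloor>(e - 1)/\<delta>\<rfloor>" unfolding j_def using fl0 by simp
    have lo: "real j * \<delta> \<le> e - 1"
    proof -
      have "real j \<le> (e - 1)/\<delta>" using jr by linarith
      then show ?thesis using \<delta> by (simp add: field_simps)
    qed
    have hi: "e - 1 \<le> real j * \<delta> + \<delta>"
    proof -
      have "(e - 1)/\<delta> \<le> real j + 1" using jr by linarith
      then show ?thesis using \<delta> by (simp add: field_simps)
    qed
    have ein: "e \<in> I j" unfolding I_def using lo hi by auto
    have "real j \<le> 1/\<delta>"
    proof -
      have "real j \<le> (e - 1)/\<delta>" using jr by linarith
      also have "\<dots> \<le> 1/\<delta>" using e12 \<delta> by (intro divide_right_mono) auto
      finally show ?thesis .
    qed
    then have "j \<le> n" unfolding n_def by linarith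
    then have "j \<in> J" unfolding J_def using ein e by auto
    then show "e \<in> (\<Union>j\<in>J. I j)" using ein by auto
  qed
  have cJ: "cover_num E \<delta> \<le> card J"
  proof -
    have "cover_num E \<delta> \<le> card ((\<lambda>j. 1 + real j * \<delta>) ` J)"
    proof (rule cover_num_le)
      show "finite ((\<lambda>j. 1 + real j * \<delta>) ` J)" using Jfin by simp
      have "(\<Union>a\<in>(\<lambda>j. 1 + real j * \<delta>) ` J. {a..a+\<delta>}) = (\<Union>j\<in>J. I j)"
        by (simp add: I_def)
      then show "E \<subseteq> (\<Union>a\<in>(\<lambda>j. 1 + real j * \<delta>) ` J. {a..a+\<delta>})" using cov by simp
    qed
    also have "\<dots> \<le> card J" by (rule card_image_le[OF Jfin])
    finally show ?thesis .
  qed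
  define pt where "pt = (\<lambda>j. SOME e. e \<in> E \<inter> I j)"
  have pt: "pt j \<in> E \<inter> I j" if "j \<in> J" for j
  proof -
    have "E \<inter> I j \<noteq> {}" using that by (simp add: J_def)
    then obtain e where "e \<in> E \<inter> I j" by blast
    then show ?thesis unfolding pt_def by (rule someI)
  qed
  define Je where "Je = {j\<in>J. even j}"
  define Jo where "Jo = {j\<in>J. odd j}"
  have "card J = card Je + card Jo"
  proof -
    have "J = Je \<union> Jo" "Je \<inter> Jo = {}" unfolding Je_def Jo_def by auto
    then show ?thesis using Jfin card_Un_disjoint[of Je Jo] unfolding Je_def Jo_def by auto
  qed
  then obtain b where Jb: "card J \<le> 2 * card {j\<in>J. even j = b}"
  proof (cases "card Jo \<le> card Je")
    case True
    have "Je = {j\<in>J. even j = True}" unfolding Je_def by simp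
    then show ?thesis using True \<open>card J = card Je + card Jo\<close> that[of True] by simp
  next
    case False
    have "Jo = {j\<in>J. even j = False}" unfolding Jo_def by simp
    then show ?thesis using False \<open>card J = card Je + card Jo\<close> that[of False] by simp
  qed
  define J' where "J' = {j\<in>J. even j = b}"
  have sep: "\<bar>pt j - pt l\<bar> \<ge> \<delta>" if "j \<in> J'" "l \<in> J'" "j < l" for j l
  proof -
    have "even j = even l" using that unfolding J'_def by auto
    then have "l \<noteq> Suc j" by auto
    then have "l \<ge> j + 2" using that(3) by linarith
    then have "real l \<ge> real j + 2" by linarith
    then have "real l * \<delta> \<ge> (real j + 2) * \<delta>" using \<delta> by (intro mult_right_mono) auto
    moreover have "pt j \<le> 1 + real j * \<delta> + \<delta>" "pt l \<ge> 1 + real l * \<delta>"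
      using pt[of j] pt[of l] that unfolding J'_def I_def by auto
    ultimately show ?thesis by (simp add: algebra_simps)
  qed
  have sep2: "\<bar>pt j - pt l\<bar> \<ge> \<delta>" if "j \<in> J'" "l \<in> J'" "j \<noteq> l" for j l
  proof (cases "j < l")
    case True then show ?thesis using sep that by blast
  next
    case False then have "l < j" using that by linarith
    then show ?thesis using sep[of l j] that by linarith
  qed
  have inj: "inj_on pt J'"
  proof (rule inj_onI, rule ccontr)
    fix j l assume "j \<in> J'" "l \<in> J'" "pt j = pt l" "j \<noteq> l"
    then show False using sep2[of j l] \<delta> by simp
  qed
  define T where "T = pt ` J'"
  have J'fin: "finite J'" unfolding J'_def using Jfin by simp
  have "card T = card J'" unfolding T_def by (rule card_image[OF inj])
  moreover have "T \<subseteq> E" unfolding T_def J'_def using pt by auto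
  moreover have "\<forall>s\<in>T. \<forall>t\<in>T. s \<noteq> t \<longrightarrow> \<bar>s - t\<bar> \<ge> \<delta>" unfolding T_def using sep2 by blast
  moreover have "finite T" unfolding T_def using J'fin by simp
  moreover have "cover_num E \<delta> \<le> 2 * card J'" using cJ Jb unfolding J'_def by linarith
  ultimately show ?thesis by (intro exI[of _ T]) auto
qed



lemma shell_sets: "{x::'a::euclidean_space. \<bar>norm x - t\<bar> < e} \<in> sets lborel"
  by measurable

lemma enn_powr_lower:
  assumes "ennreal m \<le> X" "m \<ge> 0" "q > 0"
  shows "ennreal (m powr q) \<le> enn_powr X q"
proof (cases "X = \<infinity>")
  case True then show ?thesis by (simp add: enn_powr_def)
next
  case False
  then have "enn2real (ennreal m) \<le> enn2real X" using assms(1)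
    by (intro enn2real_mono) (auto simp: less_top)
  then have "m \<le> enn2real X" using assms(2) by simp
  then have "m powr q \<le> enn2real X powr q" using assms by (intro powr_mono2) auto
  then show ?thesis using False by (simp add: enn_powr_def)
qed

lemma key:
  fixes f :: "'a::euclidean_space \<Rightarrow> real"
  assumes C: "\<forall>f::'a \<Rightarrow> real. radial f \<and> continuous_on UNIV f \<and> compact (closure {x. f x \<noteq> 0}) \<longrightarrow>
        (\<integral>\<^sup>+ x. enn_powr (sph_max E f x) q \<partial>lborel) \<le> ennreal ((C * Lp_norm p f) powr q)"
    and E: "E \<subseteq> {1..2}" and \<delta>: "0 < \<delta>" "\<delta> < 1" and q: "q > 0" and m: "m \<ge> 0"
    and f: "radial f" "continuous_on UNIV f" "compact (closure {x. f x \<noteq> 0})"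
    and avg: "\<And>t x. t \<in> E \<Longrightarrow> \<bar>norm x - t\<bar> < \<delta>/4 \<Longrightarrow> sph_avg f x t \<ge> m"
  shows "m powr q * real (cover_num E \<delta>) * (measure lborel (ball (0::'a) 1) * \<delta> / 4) \<le> (C * Lp_norm p f) powr q"
proof -
  define V where "V = measure lborel (ball (0::'a) 1)"
  have V0: "V > 0" unfolding V_def by (rule unit_ball_pos)
  obtain T where T: "finite T" "T \<subseteq> E" "\<forall>s\<in>T. \<forall>t\<in>T. s \<noteq> t \<longrightarrow> \<bar>s - t\<bar> \<ge> \<delta>"
    "cover_num E \<delta> \<le> 2 * card T"
    using count_sep[OF E \<delta>] by blast
  define S where "S = (\<lambda>t. {x::'a. \<bar>norm x - t\<bar> < \<delta>/4})"
  define U where "U = (\<Union>t\<in>T. S t)"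
  have Ssets: "S t \<in> sets lborel" for t unfolding S_def by (rule shell_sets)
  have Usets: "U \<in> sets lborel" unfolding U_def using Ssets T(1) by auto
  have disj: "disjoint_family_on S T"
    unfolding disjoint_family_on_def
  proof (intro ballI impI)
    fix s t assume st: "s \<in> T" "t \<in> T" "s \<noteq> t"
    have "\<bar>s - t\<bar> \<ge> \<delta>" using T(3) st by blast
    then have "\<not> (\<bar>norm x - s\<bar> < \<delta>/4 \<and> \<bar>norm x - t\<bar> < \<delta>/4)" for x :: 'a
      by (cases "norm x \<ge> s"; cases "norm x \<ge> t"; cases "s \<ge> t") (auto simp: abs_if)
    then show "S s \<inter> S t = {}" unfolding S_def by auto
  qed
  have Sfin: "emeasure lborel (S t) \<noteq> \<infinity>" if "t \<in> T" for t
  proof -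
    have "t \<le> 2" using that T(2) E by auto
    have "S t \<subseteq> ball 0 3"
    proof
      fix x assume "x \<in> S t"
      then have "\<bar>norm x - t\<bar> < \<delta>/4" by (simp add: S_def)
      then have "norm x < t + \<delta>/4" using abs_less_iff[of "norm x - t" "\<delta>/4"] by linarith
      then show "x \<in> ball 0 3" using \<open>t \<le> 2\<close> \<delta> by simp
    qed
    then have "emeasure lborel (S t) \<le> emeasure lborel (ball (0::'a) 3)" by (intro emeasure_mono) auto
    then show ?thesis using emeasure_lborel_ball_finite[of "0::'a" 3] by (auto simp: top_unique)
  qed
  have Smeas: "measure lborel (S t) \<ge> V * (\<delta>/2)" if "t \<in> T" for t
    unfolding S_def V_def using that T(2) E \<delta> by (intro shell_measure) auto
  have pw: "ennreal (m powr q) * indicator U x \<le> enn_powr (sph_max E f x) q" for x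
  proof (cases "x \<in> U")
    case True
    then obtain t where t: "t \<in> T" "x \<in> S t" unfolding U_def by auto
    have tE: "t \<in> E" using t T(2) by auto
    have "m \<le> sph_avg f x t" using avg[OF tE] t(2) unfolding S_def by auto
    then have "ennreal m \<le> ennreal \<bar>sph_avg f x t\<bar>" by (intro ennreal_leI) linarith
    also have "\<dots> \<le> sph_max E f x" unfolding sph_max_def using tE by (rule SUP_upper2) simp
    finally have "ennreal (m powr q) \<le> enn_powr (sph_max E f x) q" by (rule enn_powr_lower[OF _ m q])
    then show ?thesis using True by simp
  qed simp
  have "ennreal (m powr q) * emeasure lborel U = (\<integral>\<^sup>+ x. ennreal (m powr q) * indicator U x \<partial>lborel)"
    by (rule nn_integral_cmult_indicator[symmetric, OF Usets])
  also have "\<dots> \<le> (\<integral>\<^sup>+ x. enn_powr (sph_max E f x) q \<partial>lborel)"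
    by (intro nn_integral_mono pw)
  also have "\<dots> \<le> ennreal ((C * Lp_norm p f) powr q)" using C f by blast
  finally have 1: "ennreal (m powr q) * emeasure lborel U \<le> ennreal ((C * Lp_norm p f) powr q)" .
  have "emeasure lborel U = (\<Sum>t\<in>T. emeasure lborel (S t))"
    unfolding U_def by (rule sum_emeasure[symmetric]) (use Ssets disj T(1) in auto)
  also have "\<dots> = (\<Sum>t\<in>T. ennreal (measure lborel (S t)))"
    using Sfin by (intro sum.cong refl emeasure_eq_ennreal_measure) auto
  also have "\<dots> \<ge> (\<Sum>t\<in>T. ennreal (V * (\<delta>/2)))"
    using Smeas by (intro sum_mono ennreal_leI) auto
  finally have 2: "(\<Sum>t\<in>T. ennreal (V * (\<delta>/2))) \<le> emeasure lborel U" .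
  have "(\<Sum>t\<in>T. ennreal (V * (\<delta>/2))) = ennreal (\<Sum>t\<in>T. V * (\<delta>/2))"
    using V0 \<delta> by (intro sum_ennreal) auto
  with 2 have 2: "ennreal (real (card T) * (V * (\<delta>/2))) \<le> emeasure lborel U" by simp
  have "ennreal (m powr q * (real (card T) * (V * (\<delta>/2)))) = ennreal (m powr q) * ennreal (real (card T) * (V * (\<delta>/2)))"
    by (rule ennreal_mult) (use V0 \<delta> in auto)
  also have "\<dots> \<le> ennreal (m powr q) * emeasure lborel U" by (intro mult_left_mono 2) auto
  also note 1
  finally have "m powr q * (real (card T) * (V * (\<delta>/2))) \<le> (C * Lp_norm p f) powr q"
    by (subst (asm) ennreal_le_iff) auto
  moreover have "m powr q * real (cover_num E \<delta>) * (V * \<delta> / 4) \<le> m powr q * (real (card T) * (V * (\<delta>/2)))"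
  proof -
    have "real (cover_num E \<delta>) \<le> 2 * real (card T)" using T(4) by linarith
    then have "real (cover_num E \<delta>) * (V * \<delta> / 4) \<le> (2 * real (card T)) * (V * \<delta> / 4)"
      using V0 \<delta> by (intro mult_right_mono) auto
    also have "(2 * real (card T)) * (V * \<delta> / 4) = real (card T) * (V * (\<delta>/2))" by simp
    finally have "real (cover_num E \<delta>) * (V * \<delta> / 4) \<le> real (card T) * (V * (\<delta>/2))" .
    then have "m powr q * (real (cover_num E \<delta>) * (V * \<delta> / 4)) \<le> m powr q * (real (card T) * (V * (\<delta>/2)))"
      by (intro mult_left_mono) auto
    then show ?thesis by (simp add: mult.assoc)
  qed
  ultimately show ?thesis unfolding V_def by linarith
qed



lemma powr_abs_base: "(x::real) powr a = \<bar>x\<bar> powr a"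
  by (simp add: powr_def ln_real_def)

lemma seg_rel:
  assumes d: "d \<ge> 2" and b: "0 \<le> \<beta>"
    and seg: "(1 / p, 1 / q) \<in> closed_segment (Q1 d \<beta>) (Q2 d \<beta>)"
  shows "real d * (1/p) - (real d - 1) = (1 - \<beta>) * (1/q)"
proof -
  obtain u where u: "(1/p, 1/q) = (1 - u) *\<^sub>R Q1 d \<beta> + u *\<^sub>R Q2 d \<beta>"
    using seg unfolding closed_segment_def by auto
  have e1: "1/p = (1-u) * ((real d - 1) / (real d - 1 + \<beta>)) + u * (real d * (real d - 1) / ((real d)^2 - 1 + \<beta>))"
    using arg_cong[OF u, of fst] by (simp add: Q1_def Q2_def)
  have e2: "1/q = (1-u) * ((real d - 1) / (real d - 1 + \<beta>)) + u * ((real d - 1) / ((real d)^2 - 1 + \<beta>))"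
    using arg_cong[OF u, of snd] by (simp add: Q1_def Q2_def)
  have dr: "real d \<ge> 2" using d by simp
  have p1: "real d - 1 + \<beta> > 0" using dr b by simp
  have p2: "(real d)^2 - 1 + \<beta> > 0"
  proof -
    have "(real d)^2 \<ge> 2^2" using dr by (intro power_mono) auto
    then show ?thesis using b by simp
  qed
  have A: "real d * ((real d - 1) / (real d - 1 + \<beta>)) - (real d - 1) = (1 - \<beta>) * ((real d - 1) / (real d - 1 + \<beta>))"
    using p1 by (simp add: field_simps)
  have B: "real d * (real d * (real d - 1) / ((real d)^2 - 1 + \<beta>)) - (real d - 1) = (1 - \<beta>) * ((real d - 1) / ((real d)^2 - 1 + \<beta>))"
    using p2 by (simp add: field_simps power2_eq_square)
  define X1 where "X1 = (real d - 1) / (real d - 1 + \<beta>)"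
  define Y2 where "Y2 = real d * (real d - 1) / ((real d)^2 - 1 + \<beta>)"
  define Z2 where "Z2 = (real d - 1) / ((real d)^2 - 1 + \<beta>)"
  have "real d * ((1-u) * X1 + u * Y2) - (real d - 1) = (1-u) * (real d * X1 - (real d - 1)) + u * (real d * Y2 - (real d - 1))"
    by (simp add: algebra_simps)
  also have "\<dots> = (1-u) * ((1 - \<beta>) * X1) + u * ((1 - \<beta>) * Z2)"
    using A B unfolding X1_def[symmetric] Y2_def[symmetric] Z2_def[symmetric] by simp
  also have "\<dots> = (1 - \<beta>) * ((1-u) * X1 + u * Z2)" by (simp add: algebra_simps)
  finally show ?thesis unfolding e1 e2 X1_def Y2_def Z2_def .
qed

lemma geom_le: "(r::real) \<ge> 2 \<Longrightarrow> (\<Sum>k\<le>n. r ^ k) \<le> 2 * r ^ n"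
proof (induction n)
  case 0 then show ?case by simp
next
  case (Suc n)
  have "(\<Sum>k\<le>Suc n. r ^ k) = (\<Sum>k\<le>n. r ^ k) + r ^ Suc n" by simp
  also have "\<dots> \<le> 2 * r ^ n + r ^ Suc n" using Suc by simp
  also have "2 * r ^ n \<le> r * r ^ n" using Suc.prems by (intro mult_right_mono) auto
  finally show ?case by simp
qed

lemma bump_sum_props:
  fixes F :: "nat set" and a \<rho> :: "nat \<Rightarrow> real"
  assumes F: "finite F" and r: "\<And>k. k \<in> F \<Longrightarrow> \<rho> k > 0"
  defines "f \<equiv> (\<lambda>y::'a::euclidean_space. \<Sum>k\<in>F. a k * bump (\<rho> k) y)"
  shows "radial f" "continuous_on UNIV f" "compact (closure {x. f x \<noteq> 0})"
    "f \<in> borel_measurable borel"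
proof -
  show "radial f" unfolding radial_def f_def bump_def by simp
  show c: "continuous_on UNIV f" unfolding f_def
    by (intro continuous_on_sum continuous_on_mult continuous_on_const bump_cont)
  then show "f \<in> borel_measurable borel" by (rule borel_measurable_continuous_onI)
  define R where "R = (\<Sum>k\<in>F. 2 * \<rho> k)"
  have "{x. f x \<noteq> 0} \<subseteq> cball 0 R"
  proof
    fix x assume x0: "x \<in> {x. f x \<noteq> 0}"
    show "x \<in> cball 0 R"
    proof (rule ccontr)
    assume "x \<notin> cball 0 R"
    then have x: "f x \<noteq> 0" "norm x > R" using x0 by auto
    have "bump (\<rho> k) x = 0" if k: "k \<in> F" for k
    proof (rule bump_zero)
      show "\<rho> k > 0" using r k .
      have "2 * \<rho> k \<le> R" unfolding R_def
        using F k r by (intro member_le_sum) (auto intro: less_imp_le)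
      then show "norm x \<ge> 2 * \<rho> k" using x by linarith
    qed
    then have "f x = 0" unfolding f_def by simp
    then show False using x by simp
  qed
  qed
  then have "closure {x. f x \<noteq> 0} \<subseteq> cball 0 R" by (intro closure_minimal) auto
  then show "compact (closure {x. f x \<noteq> 0})"
    by (meson bounded_cball bounded_subset closed_closure compact_eq_bounded_closed)
qed

lemma Lp_bound:
  fixes f :: "'a::euclidean_space \<Rightarrow> real"
  assumes fm: "f \<in> borel_measurable borel" and p: "p > 0" and G: "integrable lborel G"
    and fg: "\<And>x. \<bar>f x\<bar> powr p \<le> G x"
  shows "Lp_norm p f \<le> (integral\<^sup>L lborel G) powr (1/p)"
proof -
  have m: "(\<lambda>x. \<bar>f x\<bar> powr p) \<in> borel_measurable lborel"
    using fm by measurable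
  have i: "integrable lborel (\<lambda>x. \<bar>f x\<bar> powr p)"
  proof (rule Bochner_Integration.integrable_bound[OF G m])
    show "AE x in lborel. norm (\<bar>f x\<bar> powr p) \<le> norm (G x)"
      using fg by (intro AE_I2) (smt (verit) powr_ge_zero real_norm_def)
  qed
  have "(LINT x | lborel. \<bar>f x\<bar> powr p) \<le> integral\<^sup>L lborel G"
    by (rule integral_mono[OF i G fg])
  moreover have "(LINT x | lborel. \<bar>f x\<bar> powr p) \<ge> 0" by (intro integral_nonneg_AE) auto
  ultimately show ?thesis unfolding Lp_norm_def using p by (intro powr_mono2) auto
qed



lemma part1:
  fixes E :: "real set" and \<beta> p q C :: real
  assumes d2: "DIM('a::euclidean_space) \<ge> 2" and E: "E \<subseteq> {1..2}" and b: "0 \<le> \<beta>"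
    and p: "p > 0" and q: "q > 0"
    and rel: "real DIM('a) * (1/p) - (real DIM('a) - 1) = (1 - \<beta>) * (1/q)"
    and C: "\<forall>f::'a \<Rightarrow> real. radial f \<and> continuous_on UNIV f \<and> compact (closure {x. f x \<noteq> 0}) \<longrightarrow>
        (\<integral>\<^sup>+ x. enn_powr (sph_max E f x) q \<partial>lborel) \<le> ennreal ((C * Lp_norm p f) powr q)"
  shows "\<exists>C'. \<forall>\<delta>\<in>{0<..<1}. \<delta> powr \<beta> * real (cover_num E \<delta>) \<le> C'"
proof -
  define d where "d = DIM('a)"
  define V where "V = measure lborel (ball (0::'a) 1)"
  have V0: "V > 0" unfolding V_def by (rule unit_ball_pos)
  define A0 where "A0 = \<bar>C\<bar> powr q * (V * 2 ^ d) powr (q / p)"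
  define B0 where "B0 = (3 / 64 ^ d) powr q * (V / 4)"
  have B0: "B0 > 0" unfolding B0_def using V0 by simp
  have "\<delta> powr \<beta> * real (cover_num E \<delta>) \<le> A0 / B0" if \<delta>: "0 < \<delta>" "\<delta> < 1" for \<delta>
  proof -
    define f where "f = (\<lambda>y::'a. \<Sum>k\<in>{0::nat}. 1 * bump \<delta> y)"
    have fprops: "radial f" "continuous_on UNIV f" "compact (closure {x. f x \<noteq> 0})"
        "f \<in> borel_measurable borel"
      using bump_sum_props[where F="{0::nat}" and a="\<lambda>_. 1" and \<rho>="\<lambda>_. \<delta>", where 'a='a] \<delta>
      unfolding f_def by auto
    have fb: "f = bump \<delta>" unfolding f_def by auto
    define m where "m = 3 / 64 ^ d * \<delta> ^ (d - 1)"
    have m0: "m \<ge> 0" unfolding m_def using \<delta> by simp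
    have avg: "sph_avg f x t \<ge> m" if "t \<in> E" "\<bar>norm x - t\<bar> < \<delta>/4" for t x
    proof -
      have "sph_avg f x t \<ge> (\<Sum>k\<in>{0::nat}. 1 * (3 * V / 64 ^ d * \<delta> ^ (d - 1))) / V"
        unfolding f_def V_def d_def
        by (rule sph_avg_lower[where F="{0::nat}" and a="\<lambda>_. 1" and \<rho>="\<lambda>_. \<delta>"]) (use that E \<delta> in auto)
      then show ?thesis using V0 by (simp add: m_def)
    qed
    have key1: "m powr q * real (cover_num E \<delta>) * (V * \<delta> / 4) \<le> (C * Lp_norm p f) powr q"
      unfolding V_def by (rule key[OF C E \<delta> q m0 fprops(1-3) avg])
    have Lp: "Lp_norm p f \<le> (V * (2 * \<delta>) ^ d) powr (1/p)"
    proof -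
      have "Lp_norm p f \<le> (integral\<^sup>L lborel (indicator (ball (0::'a) (2*\<delta>)))) powr (1/p)"
      proof (rule Lp_bound[OF fprops(4) p])
        show "integrable lborel (indicator (ball (0::'a) (2*\<delta>)) :: 'a \<Rightarrow> real)"
          using emeasure_lborel_ball_finite[of "0::'a" "2*\<delta>"] by (intro integrable_real_indicator) auto
        show "\<bar>f x\<bar> powr p \<le> indicator (ball (0::'a) (2*\<delta>)) x" for x
        proof (cases "norm x < 2 * \<delta>")
          case True
          have "\<bar>f x\<bar> powr p \<le> 1" using p fb bump_nonneg[of \<delta> x] bump_le1[of \<delta> x] by (intro powr_le1) auto
          then show ?thesis using True by simp
        next
          case False
          then have "f x = 0" using fb bump_zero[of \<delta> x] \<delta> by simp
          then show ?thesis by simp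
        qed
      qed
      also have "integral\<^sup>L lborel (indicator (ball (0::'a) (2*\<delta>))) = measure lborel (ball (0::'a) (2*\<delta>))"
        by simp
      also have "\<dots> = V * (2 * \<delta>) ^ d"
        unfolding V_def d_def by (rule content_ball') (use \<delta> in simp)
      finally show ?thesis .
    qed
    have Lp0: "Lp_norm p f \<ge> 0" unfolding Lp_norm_def by simp
    have "(C * Lp_norm p f) powr q = (\<bar>C\<bar> * Lp_norm p f) powr q"
      using Lp0 by (subst powr_abs_base) (simp add: abs_mult)
    also have "\<dots> \<le> (\<bar>C\<bar> * (V * (2 * \<delta>) ^ d) powr (1/p)) powr q"
      using Lp Lp0 q by (intro powr_mono2 mult_left_mono) auto
    also have "\<dots> = A0 * \<delta> powr (real d * q / p)"
    proof -
      have e1: "V * (2 * \<delta>) ^ d = (V * 2 ^ d) * \<delta> powr (real d)"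
        using \<delta> by (simp add: powr_realpow power_mult_distrib)
      have "(\<bar>C\<bar> * (V * (2 * \<delta>) ^ d) powr (1/p)) powr q = \<bar>C\<bar> powr q * ((V * 2 ^ d) powr (q/p) * \<delta> powr (real d * q / p))"
        unfolding e1 by (simp add: powr_mult powr_powr)
      then show ?thesis unfolding A0_def by simp
    qed
    finally have R: "(C * Lp_norm p f) powr q \<le> A0 * \<delta> powr (real d * q / p)" .
    define P where "P = \<delta> powr ((real d - 1) * q)"
    have P0: "P > 0" unfolding P_def using \<delta> by simp
    have mq: "m powr q = (3 / 64 ^ d) powr q * P"
    proof -
      have d1: "real (d - 1) = real d - 1" using d2 unfolding d_def by simp
      have "\<delta> ^ (d - 1) = \<delta> powr (real d - 1)" using powr_realpow[of \<delta> "d - 1"] \<delta> d1 by simp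
      then have "m = (3 / 64 ^ d) * \<delta> powr (real d - 1)" unfolding m_def by simp
      then have "m powr q = (3 / 64 ^ d) powr q * (\<delta> powr (real d - 1)) powr q"
        by (simp only: powr_mult)
      then show ?thesis unfolding P_def by (simp only: powr_powr)
    qed
    have ex: "\<delta> powr (real d * q / p) = P * \<delta> * \<delta> powr (- \<beta>)"
    proof -
      have "real d * q / p = (real d - 1) * q + 1 + (- \<beta>)"
      proof -
        have r2: "real d / p = (real d - 1) + (1 - \<beta>) / q" using rel unfolding d_def by simp
        have "real d * q / p = (real d / p) * q" by simp
        also have "\<dots> = ((real d - 1) + (1 - \<beta>) / q) * q" using r2 by simp
        also have "\<dots> = (real d - 1) * q + (1 - \<beta>)" using q by (simp add: distrib_right)
        finally show ?thesis by simp
      qed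
      then have "\<delta> powr (real d * q / p) = \<delta> powr ((real d - 1) * q) * \<delta> powr 1 * \<delta> powr (- \<beta>)"
        by (simp only: powr_add)
      then show ?thesis unfolding P_def using \<delta> by simp
    qed
    have "B0 * (P * \<delta>) * real (cover_num E \<delta>) = m powr q * real (cover_num E \<delta>) * (V * \<delta> / 4)"
      unfolding B0_def mq by (simp add: algebra_simps)
    also have "\<dots> \<le> A0 * (P * \<delta>) * \<delta> powr (- \<beta>)" using key1 R ex by (simp add: algebra_simps)
    finally have "B0 * real (cover_num E \<delta>) * (P * \<delta>) \<le> (A0 * \<delta> powr (- \<beta>)) * (P * \<delta>)"
      by (simp add: algebra_simps)
    then have "B0 * real (cover_num E \<delta>) \<le> A0 * \<delta> powr (- \<beta>)"
      using P0 \<delta> by (simp add: mult_le_cancel_right)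
    then have "\<delta> powr \<beta> * (B0 * real (cover_num E \<delta>)) \<le> \<delta> powr \<beta> * (A0 * \<delta> powr (- \<beta>))"
      by (intro mult_left_mono) auto
    also have "\<delta> powr \<beta> * (A0 * \<delta> powr (- \<beta>)) = A0"
      using \<delta> by (simp add: powr_minus field_simps)
    finally show ?thesis using B0 by (simp add: field_simps)
  qed
  then show ?thesis by (intro exI[of _ "A0 / B0"]) auto
qed



lemma pow_half_cancel: "((2::real) ^ n) ^ k * ((1/2) ^ k) ^ n = 1"
proof -
  have e: "((1/2::real) ^ k) ^ n = ((1/2) ^ n) ^ k"
    by (simp only: power_mult[symmetric] mult.commute)
  have "((2::real) ^ n) ^ k * ((1/2) ^ n) ^ k = (2 ^ n * (1/2) ^ n) ^ k"
    by (simp only: power_mult_distrib)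
  also have "(2::real) ^ n * (1/2) ^ n = 1"
    by (simp only: power_mult_distrib[symmetric]) simp
  finally show ?thesis unfolding e by simp
qed

lemma sum_bump_pow:
  fixes x :: "'a::euclidean_space"
  assumes d2: "d \<ge> 2" and p: "p > 0" and dp: "(real d - 1) * p = real d"
  shows "\<bar>\<Sum>k\<le>K. (2 ^ (d - 1)) ^ k * bump ((1/2) ^ k) x\<bar> powr p
     \<le> 2 powr p * (\<Sum>j\<le>K. (2 ^ d) ^ j * indicator (ball (0::'a) (2 * (1/2) ^ j)) x)"
  (is "\<bar>?f\<bar> powr p \<le> ?G")
proof -
  define a :: "nat \<Rightarrow> real" where "a = (\<lambda>k. (2 ^ (d - 1)) ^ k)"
  define J where "J = {k\<in>{..K}. norm x < 2 * (1/2) ^ k}"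
  have a0: "a k \<ge> 0" for k unfolding a_def by simp
  have G0: "?G \<ge> 0" by (intro mult_nonneg_nonneg sum_nonneg) auto
  have f0: "?f \<ge> 0" by (intro sum_nonneg mult_nonneg_nonneg bump_nonneg) auto
  have fle: "?f \<le> (\<Sum>k\<le>K. if k \<in> J then a k else 0)"
  proof (intro sum_mono)
    fix k assume k: "k \<in> {..K}"
    show "(2 ^ (d - 1)) ^ k * bump ((1/2) ^ k) x \<le> (if k \<in> J then a k else 0)"
    proof (cases "k \<in> J")
      case True then show ?thesis unfolding a_def by (simp add: bump_le1 mult_left_le)
    next
      case False
      then have "norm x \<ge> 2 * (1/2) ^ k" using k unfolding J_def by auto
      then have "bump ((1/2) ^ k) x = 0" by (intro bump_zero) auto
      then show ?thesis using False by simp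
    qed
  qed
  also have "\<dots> = (\<Sum>k\<in>J. a k)"
  proof -
    have "J \<subseteq> {..K}" unfolding J_def by auto
    then show ?thesis by (simp add: sum.If_cases Int_absorb1)
  qed
  finally have fJ: "?f \<le> (\<Sum>k\<in>J. a k)" .
  have Jfin: "finite J" unfolding J_def by simp
  show ?thesis
  proof (cases "J = {}")
    case True
    then have "?f = 0" using fJ f0 by simp
    then show ?thesis using G0 p by simp
  next
    case False
    define j0 where "j0 = Max J"
    have j0J: "j0 \<in> J" unfolding j0_def using Jfin False by simp
    have Jsub: "J \<subseteq> {..j0}" unfolding j0_def using Jfin by auto
    have "(\<Sum>k\<in>J. a k) \<le> (\<Sum>k\<le>j0. a k)" using Jsub a0 by (intro sum_mono2) auto
    also have "\<dots> \<le> 2 * (2 ^ (d - 1)) ^ j0" unfolding a_def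
    proof (rule geom_le)
      have "(2::real) ^ 1 \<le> 2 ^ (d - 1)" using d2 by (intro power_increasing) auto
      then show "(2::real) \<le> 2 ^ (d - 1)" by simp
    qed
    finally have fb: "?f \<le> 2 * (2 ^ (d - 1)) ^ j0" using fJ by linarith
    have "\<bar>?f\<bar> powr p \<le> (2 * (2 ^ (d - 1)) ^ j0) powr p"
      using f0 fb p by (intro powr_mono2) auto
    also have "\<dots> = 2 powr p * (2 ^ d) ^ j0"
    proof -
      have d1: "real (d - 1) = real d - 1" using d2 by simp
      have "((2::real) ^ (d - 1)) ^ j0 = 2 powr ((real d - 1) * real j0)"
      proof -
        have "((2::real) ^ (d - 1)) ^ j0 = 2 ^ ((d - 1) * j0)" by (simp add: power_mult)
        also have "\<dots> = 2 powr (real ((d - 1) * j0))" by (rule powr_realpow[symmetric]) simp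
        also have "real ((d - 1) * j0) = (real d - 1) * real j0" using d1 by simp
        finally show ?thesis .
      qed
      then have "(((2::real) ^ (d - 1)) ^ j0) powr p = 2 powr ((real d - 1) * real j0 * p)"
        by (simp add: powr_powr)
      also have "(real d - 1) * real j0 * p = ((real d - 1) * p) * real j0" by (simp add: algebra_simps)
      also have "\<dots> = real d * real j0" using dp by simp
      also have "(2::real) powr (real d * real j0) = (2 ^ d) ^ j0"
      proof -
        have "(2::real) powr (real d * real j0) = 2 powr (real (d * j0))" by simp
        also have "\<dots> = 2 ^ (d * j0)" by (rule powr_realpow) simp
        finally show ?thesis by (simp add: power_mult)
      qed
      finally show ?thesis by (simp add: powr_mult)
    qed
    also have "\<dots> \<le> ?G"
    proof -
      have "(2 ^ d) ^ j0 * indicator (ball (0::'a) (2 * (1/2) ^ j0)) x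
          \<le> (\<Sum>j\<le>K. (2 ^ d) ^ j * indicator (ball (0::'a) (2 * (1/2) ^ j)) x :: real)"
        using j0J unfolding J_def by (intro member_le_sum) auto
      moreover have "indicator (ball (0::'a) (2 * (1/2) ^ j0)) x = (1::real)"
        using j0J unfolding J_def by simp
      ultimately show ?thesis by (intro mult_left_mono) auto
    qed
    finally show ?thesis .
  qed
qed


lemma part2:
  fixes E :: "real set" and p q C :: real
  assumes d2: "DIM('a::euclidean_space) \<ge> 2" and E: "E \<subseteq> {1..2}"
    and p: "p > 0" and q: "q > 0"
    and rel: "real DIM('a) * (1/p) - (real DIM('a) - 1) = 0"
    and C: "\<forall>f::'a \<Rightarrow> real. radial f \<and> continuous_on UNIV f \<and> compact (closure {x. f x \<noteq> 0}) \<longrightarrow>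
        (\<integral>\<^sup>+ x. enn_powr (sph_max E f x) q \<partial>lborel) \<le> ennreal ((C * Lp_norm p f) powr q)"
  shows "\<exists>C'. \<forall>\<delta>\<in>{0<..<1}. (ln (1 / \<delta>)) powr (q / real DIM('a)) * \<delta> * real (cover_num E \<delta>) \<le> C'"
proof -
  define d where "d = DIM('a)"
  have d2': "d \<ge> 2" using d2 by (simp add: d_def)
  define V where "V = measure lborel (ball (0::'a) 1)"
  have V0: "V > 0" unfolding V_def by (rule unit_ball_pos)
  have r: "real d / p = real d - 1" using rel unfolding d_def by simp
  have dp: "(real d - 1) * p = real d"
  proof -
    have "(real d - 1) * p = (real d / p) * p" using r by simp
    also have "\<dots> = real d" using p by simp
    finally show ?thesis .
  qed
  have qp: "q / p = q * (real d - 1) / real d"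
  proof -
    have "1 / p = (real d / p) / real d" using d2' by simp
    also have "\<dots> = (real d - 1) / real d" using r by simp
    finally have "1 / p = (real d - 1) / real d" .
    then have "q * (1 / p) = q * ((real d - 1) / real d)" by simp
    then show ?thesis by simp
  qed
  define A0 where "A0 = \<bar>C\<bar> powr q * (2 powr p * V * 2 ^ d) powr (q / p)"
  define B0 where "B0 = (3 / 64 ^ d) powr q * (V / 4)"
  have B0: "B0 > 0" unfolding B0_def using V0 by simp
  have "(ln (1 / \<delta>)) powr (q / real d) * \<delta> * real (cover_num E \<delta>) \<le> A0 / B0" if \<delta>: "0 < \<delta>" "\<delta> < 1" for \<delta>
  proof -
    define K where "K = nat \<lfloor>log 2 (1/\<delta>)\<rfloor>"
    have lpos: "log 2 (1/\<delta>) > 0" using \<delta> by simp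
    have Kr: "real K = of_int \<lfloor>log 2 (1/\<delta>)\<rfloor>" unfolding K_def using lpos by simp
    have K1: "real K \<le> log 2 (1/\<delta>)" using Kr by linarith
    have K2: "log 2 (1/\<delta>) < real K + 1" using Kr by linarith
    have dK: "\<delta> \<le> (1/2) ^ k" if "k \<le> K" for k
    proof -
      have "2 ^ k \<le> (2::real) ^ K" using that by (intro power_increasing) auto
      also have "(2::real) ^ K = 2 powr (real K)" by (simp add: powr_realpow)
      also have "\<dots> \<le> 2 powr (log 2 (1/\<delta>))" using K1 by simp
      also have "\<dots> = 1/\<delta>" using \<delta> by simp
      finally have "2 ^ k \<le> 1 / \<delta>" .
      then show ?thesis using \<delta> by (simp add: field_simps power_one_over)
    qed
    have lnK: "ln (1/\<delta>) \<le> real K + 1"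
    proof -
      have "ln (1/\<delta>) = log 2 (1/\<delta>) * ln 2" using \<delta> by (simp add: log_def)
      also have "\<dots> \<le> (real K + 1) * 1" using K2 ln_2_less_1 lpos by (intro mult_mono) auto
      finally show ?thesis by simp
    qed
    have ln0: "ln (1/\<delta>) > 0" using \<delta> by simp
    define f where "f = (\<lambda>y::'a. \<Sum>k\<le>K. (2 ^ (d - 1)) ^ k * bump ((1/2) ^ k) y)"
    have fprops: "radial f" "continuous_on UNIV f" "compact (closure {x. f x \<noteq> 0})"
        "f \<in> borel_measurable borel"
      using bump_sum_props[where F="{..K}" and a="\<lambda>k. (2 ^ (d - 1)) ^ k" and \<rho>="\<lambda>k. (1/2) ^ k", where 'a='a]
      unfolding f_def by auto
    define m where "m = (real K + 1) * (3 / 64 ^ d)"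
    have m0: "m \<ge> 0" unfolding m_def by simp
    have avg: "sph_avg f x t \<ge> m" if "t \<in> E" "\<bar>norm x - t\<bar> < \<delta>/4" for t x
    proof -
      have "sph_avg f x t \<ge> (\<Sum>k\<le>K. (2 ^ (d - 1)) ^ k * (3 * V / 64 ^ d * ((1/2) ^ k) ^ (d - 1))) / V"
        unfolding f_def V_def d_def
      proof (rule sph_avg_lower[where F="{..K}" and a="\<lambda>k. (2 ^ (DIM('a) - 1)) ^ k" and \<rho>="\<lambda>k. (1/2) ^ k"])
        fix k assume k: "k \<in> {..K}"
        have "\<delta> \<le> (1/2) ^ k" using dK k by simp
        then show "0 < ((1::real)/2) ^ k \<and> ((1::real)/2) ^ k \<le> 1 \<and> \<bar>norm x - t\<bar> \<le> (1/2) ^ k / 4"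
          using that(2) by (auto simp: power_le_one)
      qed (use that E in auto)
      also have "(\<Sum>k\<le>K. (2 ^ (d - 1)) ^ k * (3 * V / 64 ^ d * ((1/2) ^ k) ^ (d - 1))) = (\<Sum>k\<le>K. 3 * V / 64 ^ d)"
      proof (intro sum.cong refl)
        fix k
        have h: "((2::real) ^ (d - 1)) ^ k * ((1/2) ^ k) ^ (d - 1) = 1"
          by (rule pow_half_cancel)
        have "(2 ^ (d - 1)) ^ k * (3 * V / 64 ^ d * ((1/2) ^ k) ^ (d - 1))
            = (3 * V / 64 ^ d) * (((2::real) ^ (d - 1)) ^ k * ((1/2) ^ k) ^ (d - 1))"
          by (rule mult.left_commute)
        then show "(2 ^ (d - 1)) ^ k * (3 * V / 64 ^ d * ((1/2) ^ k) ^ (d - 1)) = 3 * V / 64 ^ d"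
          unfolding h by simp
      qed
      finally have X: "(\<Sum>k\<le>K. 3 * V / 64 ^ d) / V \<le> sph_avg f x t" .
      have "(\<Sum>k\<le>K. 3 * V / 64 ^ d) = (real K + 1) * (3 / 64 ^ d) * V" by simp
      then have "(\<Sum>k\<le>K. 3 * V / 64 ^ d) / V = m" using V0 unfolding m_def by simp
      then show ?thesis using X by simp
    qed
    have key1: "m powr q * real (cover_num E \<delta>) * (V * \<delta> / 4) \<le> (C * Lp_norm p f) powr q"
      unfolding V_def by (rule key[OF C E \<delta> q m0 fprops(1-3) avg])
    define G where "G = (\<lambda>x. 2 powr p * (\<Sum>j\<le>K. (2 ^ d) ^ j * indicator (ball (0::'a) (2 * (1/2) ^ j)) x :: real))"
    have ind_int: "integrable lborel (indicator (ball (0::'a) (2 * (1/2) ^ j)) :: 'a \<Rightarrow> real)" for j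
      apply (rule integrable_real_indicator)
       apply simp
      apply (rule emeasure_lborel_ball_finite)
      done
    have Gint: "integrable lborel G" unfolding G_def
      by (intro Bochner_Integration.integrable_mult_right Bochner_Integration.integrable_sum ind_int)
    have "integral\<^sup>L lborel G = 2 powr p * (\<Sum>j\<le>K. (2 ^ d) ^ j * measure lborel (ball (0::'a) (2 * (1/2) ^ j)))"
      unfolding G_def
      by (subst integral_mult_right_zero, subst Bochner_Integration.integral_sum)
         (auto intro!: ind_int)
    also have "(\<Sum>j\<le>K. (2 ^ d) ^ j * measure lborel (ball (0::'a) (2 * (1/2) ^ j))) = (\<Sum>j\<le>K. V * 2 ^ d)"
    proof (intro sum.cong refl)
      fix j
      have "measure lborel (ball (0::'a) (2 * (1/2) ^ j)) = V * (2 * (1/2) ^ j) ^ d"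
        unfolding V_def d_def by (rule content_ball') simp
      moreover have "((2::real) ^ d) ^ j * (2 * (1/2) ^ j) ^ d = 2 ^ d"
      proof -
        have "((2::real) ^ d) ^ j * (2 * (1/2) ^ j) ^ d = ((2::real) ^ d) ^ j * (2 ^ d * ((1/2) ^ j) ^ d)"
          by (simp only: power_mult_distrib)
        also have "\<dots> = 2 ^ d * (((2::real) ^ d) ^ j * ((1/2) ^ j) ^ d)"
          by (rule mult.left_commute)
        also have "\<dots> = 2 ^ d" unfolding pow_half_cancel by simp
        finally show ?thesis .
      qed
      ultimately have "(2 ^ d) ^ j * measure lborel (ball (0::'a) (2 * (1/2) ^ j)) = V * (((2::real) ^ d) ^ j * (2 * (1/2) ^ j) ^ d)"
        by (simp only: mult.left_commute)
      then show "(2 ^ d) ^ j * measure lborel (ball (0::'a) (2 * (1/2) ^ j)) = V * 2 ^ d"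
        using \<open>((2::real) ^ d) ^ j * (2 * (1/2) ^ j) ^ d = 2 ^ d\<close> by simp
    qed
    finally have intG: "integral\<^sup>L lborel G = 2 powr p * V * 2 ^ d * (real K + 1)" by simp
    have Lp: "Lp_norm p f \<le> (2 powr p * V * 2 ^ d * (real K + 1)) powr (1/p)"
    proof -
      have "Lp_norm p f \<le> (integral\<^sup>L lborel G) powr (1/p)"
      proof (rule Lp_bound[OF fprops(4) p Gint])
        show "\<bar>f x\<bar> powr p \<le> G x" for x
          unfolding f_def G_def by (rule sum_bump_pow[OF d2' p dp])
      qed
      then show ?thesis using intG by simp
    qed
    have Lp0: "Lp_norm p f \<ge> 0" unfolding Lp_norm_def by simp
    have "(C * Lp_norm p f) powr q = (\<bar>C\<bar> * Lp_norm p f) powr q"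
      using Lp0 by (subst powr_abs_base) (simp add: abs_mult)
    also have "\<dots> \<le> (\<bar>C\<bar> * (2 powr p * V * 2 ^ d * (real K + 1)) powr (1/p)) powr q"
      using Lp Lp0 q by (intro powr_mono2 mult_left_mono) auto
    also have "\<dots> = A0 * (real K + 1) powr (q / p)"
    proof -
      have "(\<bar>C\<bar> * (2 powr p * V * 2 ^ d * (real K + 1)) powr (1/p)) powr q
          = \<bar>C\<bar> powr q * ((2 powr p * V * 2 ^ d) powr (q/p) * (real K + 1) powr (q/p))"
        by (simp add: powr_mult powr_powr)
      then show ?thesis unfolding A0_def by simp
    qed
    finally have R: "(C * Lp_norm p f) powr q \<le> A0 * (real K + 1) powr (q / p)" .
    define P where "P = (real K + 1) powr (q / p)"
    have P0: "P > 0" unfolding P_def by simp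
    have mq: "m powr q = (3 / 64 ^ d) powr q * (P * (real K + 1) powr (q / real d))"
    proof -
      have "m powr q = (real K + 1) powr q * (3 / 64 ^ d) powr q" unfolding m_def by (simp only: powr_mult)
      moreover have "(real K + 1) powr q = P * (real K + 1) powr (q / real d)"
      proof -
        have "q = q / p + q / real d" using qp d2' by (simp add: field_simps)
        then have "(real K + 1) powr q = (real K + 1) powr (q / p + q / real d)" by simp
        then show ?thesis unfolding P_def by (simp add: powr_add)
      qed
      ultimately show ?thesis by simp
    qed
    have "B0 * ((real K + 1) powr (q / real d) * \<delta> * real (cover_num E \<delta>)) * P = m powr q * real (cover_num E \<delta>) * (V * \<delta> / 4)"
      unfolding B0_def mq by (simp add: algebra_simps)
    also have "\<dots> \<le> A0 * P" using key1 R unfolding P_def by linarith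
    finally have Y: "B0 * ((real K + 1) powr (q / real d) * \<delta> * real (cover_num E \<delta>)) \<le> A0"
      using P0 by simp
    have "(ln (1 / \<delta>)) powr (q / real d) * \<delta> * real (cover_num E \<delta>)
        \<le> (real K + 1) powr (q / real d) * \<delta> * real (cover_num E \<delta>)"
      using lnK ln0 q \<delta> by (intro mult_right_mono powr_mono2) auto
    then have "B0 * ((ln (1 / \<delta>)) powr (q / real d) * \<delta> * real (cover_num E \<delta>))
        \<le> B0 * ((real K + 1) powr (q / real d) * \<delta> * real (cover_num E \<delta>))"
      using B0 by (intro mult_left_mono) auto
    with Y have "B0 * ((ln (1 / \<delta>)) powr (q / real d) * \<delta> * real (cover_num E \<delta>)) \<le> A0" by linarith
    then show ?thesis using B0 by (simp add: pos_le_divide_eq mult.commute)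
  qed
  then show ?thesis unfolding d_def by (intro exI[of _ "A0 / B0"]) auto
qed



theorem proposition4p1:
  fixes E :: "real set" and \<beta> p q :: real
  assumes "DIM('a::euclidean_space) \<ge> 2"
    and "E \<subseteq> {1..2}"
    and "0 \<le> \<beta>" and "\<beta> \<le> 1"
    and "p > 0" and "q > 0"
    and "(1 / p, 1 / q) \<in> closed_segment (Q1 DIM('a) \<beta>) (Q2 DIM('a) \<beta>)"
    and "sph_max_bounded_rad TYPE('a) E p q"
  shows "(\<exists>C. \<forall>\<delta>\<in>{0<..<1}. \<delta> powr \<beta> * real (cover_num E \<delta>) \<le> C) \<and>
         (\<beta> = 1 \<longrightarrow> (\<exists>C. \<forall>\<delta>\<in>{0<..<1}.
           (ln (1 / \<delta>)) powr (q / real DIM('a)) * \<delta> * real (cover_num E \<delta>) \<le> C))"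
proof -
  obtain C where C: "\<forall>f::'a \<Rightarrow> real. radial f \<and> continuous_on UNIV f \<and> compact (closure {x. f x \<noteq> 0}) \<longrightarrow>
        (\<integral>\<^sup>+ x. enn_powr (sph_max E f x) q \<partial>lborel) \<le> ennreal ((C * Lp_norm p f) powr q)"
    using assms(8) unfolding sph_max_bounded_rad_def by blast
  have rel: "real DIM('a) * (1/p) - (real DIM('a) - 1) = (1 - \<beta>) * (1/q)"
    by (rule seg_rel[OF assms(1) assms(3) assms(7)])
  have 1: "\<exists>C. \<forall>\<delta>\<in>{0<..<1}. \<delta> powr \<beta> * real (cover_num E \<delta>) \<le> C"
    by (rule part1[OF assms(1) assms(2) assms(3) assms(5) assms(6) rel C])
  have 2: "\<exists>C. \<forall>\<delta>\<in>{0<..<1}. (ln (1 / \<delta>)) powr (q / real DIM('a)) * \<delta> * real (cover_num E \<delta>) \<le> C"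
    if "\<beta> = 1"
  proof (rule part2[OF assms(1) assms(2) assms(5) assms(6) _ C])
    show "real DIM('a) * (1/p) - (real DIM('a) - 1) = 0" using rel that by simp
  qed
  show ?thesis using 1 2 by blast
qed

end
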